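(* For any weight matrix $V\in\mathbb{R}^{2p\times(d+1)}$, $\lVert\nabla_VL\rVert\le\sqrt{2p}\,\min\{L(V),1\}$.
   Context: $p\ge1$, $h=1/p$. Huberized ReLU: $\phi(z)=0$ for $z<0$, $z^2/(2h)$ for $z\in[0,h]$, $z-h/2$ for $z>h$. Data $(x_1,y_1),\ldots,(x_n,y_n)$ with $x_s\in\mathbb{R}^{d+1}$, $\lVert x_s\rVert=1$, $y_s\in\{-1,1\}$. For $V$ with rows $v_1,\ldots,v_{2p}$ and fixed $u_1=\cdots=u_p=1$, $u_{p+1}=\cdots=u_{2p}=-1$: $f_V(x)=\sum_{i=1}^{2p}u_i\phi(v_i\cdot x)$, $L(V)=\frac1n\sum_s\ln(1+\exp(-y_sf_V(x_s)))$. $\lVert\cdot\rVert$ is the Frobenius (Euclidean) norm. *)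

theory Defs
  imports "HOL-Analysis.Analysis"
begin

definition hrelu :: "nat \<Rightarrow> real \<Rightarrow> real" where
  "hrelu p z = (let h = 1 / real p in
     if z < 0 then 0 else if z \<le> h then z\<^sup>2 / (2 * h) else z - h / 2)"

text \<open>Fixed output weights: rows indexed by 'p + 'p; Inl rows (the first p) have u = 1,
  Inr rows (the last p) have u = -1.\<close>
definition uw :: "('p + 'p) \<Rightarrow> real" where
  "uw i = (case i of Inl _ \<Rightarrow> 1 | Inr _ \<Rightarrow> -1)"

definition fnet :: "nat \<Rightarrow> real^'d^('p::finite + 'p) \<Rightarrow> real^'d \<Rightarrow> real" where
  "fnet p V x = (\<Sum>i\<in>UNIV. uw i * hrelu p ((V $ i) \<bullet> x))"

definition lossL :: "nat \<Rightarrow> nat \<Rightarrow> (nat \<Rightarrow> real^'d) \<Rightarrow> (nat \<Rightarrow> real)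
                     \<Rightarrow> real^'d^('p::finite + 'p) \<Rightarrow> real" where
  "lossL p n xs ys V = (1 / real n) * (\<Sum>s<n. ln (1 + exp (- ys s * fnet p V (xs s))))"

end

theory Submission imports Defs "HOL-Library.Cardinality" begin

definition hd :: "nat \<Rightarrow> real \<Rightarrow> real" where
  "hd p z = (if z < 0 then 0 else if z \<le> 1 / real p then z * real p else 1)"

lemma hrelu_deriv:
  assumes "p \<ge> 1"
  shows "(hrelu p has_real_derivative hd p z) (at z)"
proof -
  define h where "h = 1 / real p"
  have hp: "h > 0" using assms by (simp add: h_def)
  define g where "g = (\<lambda>z::real. if z \<in> {..h} then z\<^sup>2 / (2*h) else z - h/2)"
  define g' where "g' = (\<lambda>z::real. if z \<in> {..h} then z / h else 1)"
  have gd: "(g has_vector_derivative g' x) (at x within UNIV)" for x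
    unfolding g_def g'_def
  proof (rule has_vector_derivative_If_within_closures)
    show "x \<in> {..h} \<union> {h<..}" by auto
    show "UNIV = {..h} \<union> {h<..}" by auto
    show "((\<lambda>z. z\<^sup>2 / (2 * h)) has_vector_derivative x / h) (at x within {..h} \<union> closure {..h} \<inter> closure {h<..})"
      apply (rule has_vector_derivative_at_within)
      unfolding has_real_derivative_iff_has_vector_derivative[symmetric]
      using hp by (auto intro!: derivative_eq_intros simp: field_simps)
    show "((\<lambda>z. z - h/2) has_vector_derivative 1) (at x within {h<..} \<union> closure {..h} \<inter> closure {h<..})"
      apply (rule has_vector_derivative_at_within)
      unfolding has_real_derivative_iff_has_vector_derivative[symmetric]
      by (auto intro!: derivative_eq_intros)
    show "x \<in> closure {..h} \<Longrightarrow> x \<in> closure {h<..} \<Longrightarrow> x\<^sup>2 / (2 * h) = x - h / 2"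
      using hp by (simp add: field_simps power2_eq_square)
    show "x \<in> closure {..h} \<Longrightarrow> x \<in> closure {h<..} \<Longrightarrow> x / h = 1"
      using hp by simp
  qed
  have fd: "((\<lambda>z. if z \<in> {..<0} then 0 else g z) has_vector_derivative (if z \<in> {..<0} then 0 else g' z)) (at z within UNIV)"
  proof (rule has_vector_derivative_If_within_closures)
    show "z \<in> {..<0} \<union> {0..}" by auto
    show "UNIV = {..<0::real} \<union> {0..}" by auto
    show "((\<lambda>z. 0) has_vector_derivative 0) (at z within {..<0} \<union> closure {..<0} \<inter> closure {0..})"
      by (rule has_vector_derivative_const)
    show "(g has_vector_derivative g' z) (at z within {0..} \<union> closure {..<0} \<inter> closure {0..})"
      using gd by (rule has_vector_derivative_within_subset) auto
    show "z \<in> closure {..<0} \<Longrightarrow> z \<in> closure {0..} \<Longrightarrow> 0 = g z"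
      using hp by (simp add: g_def)
    show "z \<in> closure {..<0} \<Longrightarrow> z \<in> closure {0..} \<Longrightarrow> 0 = g' z"
      using hp by (simp add: g'_def)
  qed
  have e1: "hrelu p = (\<lambda>z. if z \<in> {..<0} then 0 else g z)"
    by (auto simp: hrelu_def g_def h_def Let_def fun_eq_iff)
  have e2: "hd p z = (if z \<in> {..<0} then 0 else g' z)"
    using hp by (auto simp: hd_def g'_def h_def)
  show ?thesis using fd unfolding e1 e2 has_real_derivative_iff_has_vector_derivative by simp
qed

lemma comp_deriv:
  assumes "p \<ge> 1"
  shows "((\<lambda>V::real^'d^'q. hrelu p ((V $ i) \<bullet> x)) has_derivative
          (\<lambda>H. hd p ((V $ i) \<bullet> x) * ((H $ i) \<bullet> x))) (at V)"
proof -
  have l: "((\<lambda>V::real^'d^'q. (V $ i) \<bullet> x) has_derivative (\<lambda>H. (H $ i) \<bullet> x)) (at V)"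
    by (auto intro!: derivative_eq_intros bounded_linear.has_derivative[OF bounded_linear_vec_nth])
  have g: "(hrelu p has_derivative (\<lambda>t. hd p ((V $ i) \<bullet> x) * t)) (at ((V $ i) \<bullet> x))"
    using hrelu_deriv[OF assms] by (simp add: has_field_derivative_def)
  show ?thesis using has_derivative_compose[OF l g] .
qed

lemma fnet_deriv:
  assumes "p \<ge> 1"
  shows "((\<lambda>V. fnet p V x) has_derivative
          (\<lambda>H. \<Sum>i\<in>UNIV. uw i * (hd p ((V $ i) \<bullet> x) * ((H $ i) \<bullet> x)))) (at V)"
  unfolding fnet_def
  by (intro has_derivative_sum has_derivative_mult_right comp_deriv[OF assms])

lemma logi_bound:
  fixes t :: real
  shows "exp (-t) / (1 + exp (-t)) \<le> min (ln (1 + exp (-t))) 1"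
proof -
  define a where "a = exp (-t)"
  have a: "a > 0" by (simp add: a_def)
  have "ln (1 / (1 + a)) \<le> 1 / (1 + a) - 1" using a by (intro ln_le_minus_one) simp
  hence "a / (1 + a) \<le> ln (1 + a)" using a by (simp add: ln_div field_simps)
  moreover have "a / (1 + a) \<le> 1" using a by simp
  ultimately show ?thesis unfolding a_def by simp
qed


theorem lemma3:
  fixes V :: "real^'d^('p::finite + 'p)"
    and xs :: "nat \<Rightarrow> real^'d" and ys :: "nat \<Rightarrow> real" and n p :: nat
  assumes "CARD('p) = p" and "p \<ge> 1"
    and "\<And>s. s < n \<Longrightarrow> norm (xs s) = 1"
    and "\<And>s. s < n \<Longrightarrow> ys s \<in> {-1, 1}"
  shows "\<exists>G. (GDERIV (lossL p n xs ys) V :> G)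
             \<and> norm G \<le> sqrt (2 * real p) * min (lossL p n xs ys V) 1"
proof -
  define F where "F s = fnet p V (xs s)" for s
  define c where "c s = - ys s * exp (- ys s * F s) / (1 + exp (- ys s * F s))" for s
  define a where "a s i = (1 / real n) * c s * uw i * hd p ((V $ i) \<bullet> xs s)" for s i
  define G :: "real^'d^('p + 'p)" where "G = (\<chi> i. \<Sum>s<n. a s i *\<^sub>R xs s)"
  define M where "M = min (lossL p n xs ys V) 1"
  have d1: "((\<lambda>W. ln (1 + exp (- ys s * fnet p W (xs s)))) has_derivative
     (\<lambda>H. c s * (\<Sum>i\<in>UNIV. uw i * (hd p ((V $ i) \<bullet> xs s) * ((H $ i) \<bullet> xs s))))) (at V)" for s
  proof -
    let ?D = "\<lambda>H. \<Sum>i\<in>UNIV. uw i * (hd p ((V $ i) \<bullet> xs s) * ((H $ i) \<bullet> xs s))"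
    have a1: "((\<lambda>W. - ys s * fnet p W (xs s)) has_derivative (\<lambda>H. - ys s * ?D H)) (at V)"
      by (rule has_derivative_mult_right[OF fnet_deriv[OF assms(2)]])
    have a2: "((\<lambda>W. 1 + exp (- ys s * fnet p W (xs s))) has_derivative (\<lambda>H. exp (- ys s * F s) * (- ys s * ?D H))) (at V)"
      using has_derivative_add[OF has_derivative_const[of 1] has_derivative_exp[OF a1]] by (simp add: F_def mult_ac)
    have a3: "((\<lambda>W. ln (1 + exp (- ys s * fnet p W (xs s)))) has_derivative (\<lambda>H. (exp (- ys s * F s) * (- ys s * ?D H)) * inverse (1 + exp (- ys s * F s)))) (at V)"
      using has_derivative_ln[OF _ a2] by (simp add: F_def add_pos_pos)
    show ?thesis
      using a3 by (rule has_derivative_eq_rhs) (simp add: c_def fun_eq_iff field_simps)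
  qed
  have d2: "(lossL p n xs ys has_derivative
     (\<lambda>H. (1 / real n) * (\<Sum>s<n. c s * (\<Sum>i\<in>UNIV. uw i * (hd p ((V $ i) \<bullet> xs s) * ((H $ i) \<bullet> xs s)))))) (at V)"
    unfolding lossL_def[abs_def]
    by (intro has_derivative_mult_right has_derivative_sum d1)
  have eq: "(\<lambda>H. (1 / real n) * (\<Sum>s<n. c s * (\<Sum>i\<in>UNIV. uw i * (hd p ((V $ i) \<bullet> xs s) * ((H $ i) \<bullet> xs s))))) = (\<lambda>H. H \<bullet> G)"
  proof
    fix H :: "real^'d^('p + 'p)"
    have "H \<bullet> G = (\<Sum>i\<in>UNIV. \<Sum>s<n. a s i * ((H $ i) \<bullet> xs s))"
      unfolding G_def inner_vec_def[of H] vec_lambda_beta by (simp add: inner_sum_right)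
    also have "\<dots> = (\<Sum>s<n. \<Sum>i\<in>UNIV. a s i * ((H $ i) \<bullet> xs s))" by (rule sum.swap)
    also have "\<dots> = (1 / real n) * (\<Sum>s<n. c s * (\<Sum>i\<in>UNIV. uw i * (hd p ((V $ i) \<bullet> xs s) * ((H $ i) \<bullet> xs s))))"
      unfolding a_def by (simp add: sum_distrib_left mult.assoc)
    finally show "(1 / real n) * (\<Sum>s<n. c s * (\<Sum>i\<in>UNIV. uw i * (hd p ((V $ i) \<bullet> xs s) * ((H $ i) \<bullet> xs s)))) = H \<bullet> G" by simp
  qed
  have gd: "GDERIV (lossL p n xs ys) V :> G"
    unfolding gderiv_def using d2 unfolding eq .
  have cb: "\<bar>c s\<bar> \<le> min (ln (1 + exp (- ys s * F s))) 1" if "s < n" for s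
  proof -
    have y: "\<bar>ys s\<bar> = 1" using assms(4)[OF that] by auto
    have "\<bar>c s\<bar> = exp (- (ys s * F s)) / (1 + exp (- (ys s * F s)))"
      unfolding c_def using y by (simp add: abs_mult abs_divide add_pos_pos)
    also have "\<dots> \<le> min (ln (1 + exp (- (ys s * F s)))) 1" by (rule logi_bound)
    finally show ?thesis by simp
  qed
  have hdb: "0 \<le> hd p z \<and> hd p z \<le> 1" for z
    using assms(2) by (auto simp: hd_def field_simps)
  have ub: "\<bar>uw i\<bar> = 1" for i by (simp add: uw_def split: sum.split)
  have Gi: "norm (G $ i) \<le> M" for i
  proof -
    have "norm (G $ i) \<le> (\<Sum>s<n. norm (a s i *\<^sub>R xs s))"
      unfolding G_def vec_lambda_beta by (rule norm_sum)
    also have "\<dots> \<le> (\<Sum>s<n. (1 / real n) * min (ln (1 + exp (- ys s * F s))) 1)"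
    proof (rule sum_mono)
      fix s assume s: "s \<in> {..<n}"
      have "norm (a s i *\<^sub>R xs s) = (1 / real n) * \<bar>c s\<bar> * \<bar>hd p ((V $ i) \<bullet> xs s)\<bar>"
        using assms(3)[of s] s ub[of i] by (simp add: a_def abs_mult)
      also have "\<dots> \<le> (1 / real n) * \<bar>c s\<bar> * 1"
        using hdb by (intro mult_left_mono) auto
      also have "\<dots> = (1 / real n) * \<bar>c s\<bar>" by simp
      also have "\<dots> \<le> (1 / real n) * min (ln (1 + exp (- ys s * F s))) 1"
        using cb[of s] s by (intro mult_left_mono) auto
      finally show "norm (a s i *\<^sub>R xs s) \<le> (1 / real n) * min (ln (1 + exp (- ys s * F s))) 1" .
    qed
    also have "\<dots> \<le> M"
    proof (cases "n = 0")
      case True then show ?thesis by (simp add: M_def lossL_def)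
    next
      case False
      have A: "(\<Sum>s<n. (1 / real n) * min (ln (1 + exp (- ys s * F s))) 1) \<le> lossL p n xs ys V"
        unfolding lossL_def F_def sum_distrib_left[symmetric]
        by (intro mult_left_mono sum_mono) auto
      have "(\<Sum>s<n. (1 / real n) * min (ln (1 + exp (- ys s * F s))) 1) \<le> (\<Sum>s<n. (1 / real n))"
        by (rule sum_mono, rule mult_right_le_one_le) auto
      also have "\<dots> = 1" using False by simp
      finally show ?thesis using A by (simp add: M_def)
    qed
    finally show ?thesis .
  qed
  have M0: "M \<ge> 0" using Gi[of undefined] norm_ge_zero[of "G $ undefined"] by linarith
  have "norm G = sqrt (\<Sum>i\<in>UNIV. (norm (G $ i))\<^sup>2)"
    unfolding norm_vec_def L2_set_def ..
  also have "\<dots> \<le> sqrt (\<Sum>i\<in>(UNIV::('p+'p) set). M\<^sup>2)"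
    using Gi by (intro real_sqrt_le_mono sum_mono power_mono) auto
  also have "\<dots> = sqrt (2 * real p) * M"
    using M0 assms(1) by (simp add: real_sqrt_mult card_UNIV_sum)
  finally show ?thesis using gd M_def by blast
qed

end
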